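(* Let $\alpha,\beta,\gamma>0$ with $\gamma<1/5$, $\delta<1/2$, and $x_0,y\in\mathcal D(\delta)$ with $\|x_0-y\|\le\frac45r_\delta$ lying on different sides of a barrier $B_i$, $i\ge1$. Let $X$ be the snapping-out Brownian motion with $X_0=x_0$ (driven by $W$ and $s_1,\dots,s_m$), and suppose the event $$\mathcal A:=\Big\{\mathcal E_1<\alpha r_\delta,\ \mathcal E_2>\beta r_\delta,\ \|W_t-(t/r_\delta^2)(y-x_0)\|\le\gamma r_\delta\ \forall t\le r_\delta^2\Big\}$$ occurs. Then for every $t\le r_\delta^2$ with $L^{(i)}_t<(1/5-\gamma)r_\delta$ one has $X_t\in\mathsf B(x_0,r_\delta)$.
   Context: Setting. $D\subseteq\mathbb R^2$ is the closure of a bounded open set $D_0$; $D$ is connected and simply connected, with $C^\infty$ boundary $B_0:=\partial D$, a simple closed curve. $B_1,\dots,B_m\subseteq D_0$ are $C^\infty$ simple closed curves with $B_i\cap B_j=\emptyset$ for $i\neq j$ ($0\le i,j\le m$). For each $i$, the positive side of $B_i$ is the closure of the bounded component of $\mathbb R^2\setminus B_i$, the negative side the closure of the unbounded component (points of $B_i$ lie on both sides); $\vec n_i$ is the unit normal field on $B_i$ pointing into the bounded component. Fix $\lambda_i^\pm>0$. Let $W_t$ be a standard planar Wiener process and, independently, $s_1,\dots,s_m$ independent càdlàg Markov chains on $\{-1,+1\}$, $s_i$ jumping from $-1$ to $+1$ at rate $\lambda_i^+$ and from $+1$ to $-1$ at rate $\lambda_i^-$; $s_0\equiv+1$. A snapping-out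 Brownian motion is a family of continuous processes $X_t\in D$, $L^{(i)}_t\ge0$ such that a.s.: (i) $dX_t=dW_t+\sum_{i=0}^m s_i(L^{(i)}_t)\vec n_i(X_t)\mathbf 1\{X_t\in B_i\}dL^{(i)}_t$; (ii) $L^{(i)}$ nondecreasing, $L^{(i)}_0=0$, $L^{(i)}_t=\int_0^t\mathbf 1\{X_r\in B_i\}dL^{(i)}_r$; (iii) $s_i(L^{(i)}_t)=+1$ (resp. $-1$) implies $X_t$ is on the positive (resp. negative) side of $B_i$. Here $s_i(0)$ is $+1$ if $x_0$ is on the positive side of $B_i$ and $-1$ otherwise. Parameters: $\lambda_{\max}=\max\lambda_j^\pm$; $\kappa$ maximal unsigned curvature of $B_0,\dots,B_m$; $\rho:=\sup\{r\ge0:\mathsf B(x,r')\cap\bigcup_jB_j\text{ connected }\forall r'\le r,\ x\in D\}$ ($\mathsf B$ = open ball); $r_\delta:=\delta\min\{1/\kappa,1/\lambda_{\max},\rho\}$; $\mathcal D(\delta):=\{x\in D:\|x-z\|\ge r_\delta/5\ \forall z\in\bigcup_jB_j\}$. Also $\mathcal E_1:=\inf\{t\ge0:s_i(t)\ne s_i(0)\}$ and $\mathcal E_2:=\inf\{t\ge\mathcal E_1:s_i(t)\ne s_i(\mathcal E_1)\}-\mathcal E_1$. *)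

theory Defs
  imports "HOL-Analysis.Analysis"
begin

text \<open>Points of the plane R^2 are represented as complex numbers.\<close>

definition smooth_closed_param :: "(real \<Rightarrow> complex) \<Rightarrow> bool" where
  "smooth_closed_param g \<longleftrightarrow>
     (\<exists>d :: nat \<Rightarrow> real \<Rightarrow> complex. d 0 = g \<and>
        (\<forall>n t. (d n has_vector_derivative d (Suc n) t) (at t))) \<and>
     (\<forall>t. g (t + 1) = g t) \<and> inj_on g {0..<1} \<and>
     (\<forall>t. vector_derivative g (at t) \<noteq> 0)"

definition param_of :: "(real \<Rightarrow> complex) \<Rightarrow> complex set \<Rightarrow> bool" where
  "param_of g B \<longleftrightarrow> smooth_closed_param g \<and> B = g ` {0..1}"

definition smooth_simple_closed_curve :: "complex set \<Rightarrow> bool" where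
  "smooth_simple_closed_curve B \<longleftrightarrow> (\<exists>g. param_of g B)"

definition pos_side :: "complex set \<Rightarrow> complex set" where
  "pos_side B = closure (inside B)"

definition neg_side :: "complex set \<Rightarrow> complex set" where
  "neg_side B = closure (outside B)"

definition curv :: "(real \<Rightarrow> complex) \<Rightarrow> real \<Rightarrow> real" where
  "curv g t = (let g1 = vector_derivative g (at t);
                   g2 = vector_derivative (\<lambda>u. vector_derivative g (at u)) (at t)
               in \<bar>Im (cnj g1 * g2)\<bar> / norm g1 ^ 3)"

definition max_curvature :: "(nat \<Rightarrow> complex set) \<Rightarrow> nat \<Rightarrow> real" where
  "max_curvature B m = Sup {curv g t | i g t. i \<le> m \<and> param_of g (B i)}"

definition inward_normal :: "complex set \<Rightarrow> complex \<Rightarrow> complex" where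
  "inward_normal B x = (THE v. norm v = 1 \<and>
      (\<exists>g t. param_of g B \<and> g t = x \<and> Re (cnj v * vector_derivative g (at t)) = 0) \<and>
      (\<forall>\<^sub>F e in at_right 0. x + of_real e * v \<in> inside B))"

definition lambda_max :: "(nat \<Rightarrow> real) \<Rightarrow> (nat \<Rightarrow> real) \<Rightarrow> nat \<Rightarrow> real" where
  "lambda_max lp lm m = Max ((\<lambda>i. max (lp i) (lm i)) ` {1..m})"

definition rho :: "complex set \<Rightarrow> (nat \<Rightarrow> complex set) \<Rightarrow> nat \<Rightarrow> real" where
  "rho D B m = Sup {r. r \<ge> 0 \<and> (\<forall>r'\<le>r. \<forall>x\<in>D. connected (ball x r' \<inter> (\<Union>j\<le>m. B j)))}"

definition r_delta :: "real \<Rightarrow> complex set \<Rightarrow> (nat \<Rightarrow> complex set) \<Rightarrow> nat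
                       \<Rightarrow> (nat \<Rightarrow> real) \<Rightarrow> (nat \<Rightarrow> real) \<Rightarrow> real" where
  "r_delta \<delta> D B m lp lm =
     \<delta> * min (min (1 / max_curvature B m) (1 / lambda_max lp lm m)) (rho D B m)"

definition calD :: "real \<Rightarrow> complex set \<Rightarrow> (nat \<Rightarrow> complex set) \<Rightarrow> nat
                    \<Rightarrow> (nat \<Rightarrow> real) \<Rightarrow> (nat \<Rightarrow> real) \<Rightarrow> complex set" where
  "calD \<delta> D B m lp lm = {x \<in> D. \<forall>z \<in> (\<Union>j\<le>m. B j). dist x z \<ge> r_delta \<delta> D B m lp lm / 5}"

definition LS_integral :: "(real \<Rightarrow> real) \<Rightarrow> (real \<Rightarrow> 'a::{banach,second_countable_topology}) \<Rightarrow> real \<Rightarrow> 'a" where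
  "LS_integral F f t =
     integral\<^sup>L (interval_measure (\<lambda>u. F (max 0 u))) (\<lambda>r. indicator {0<..t} r *\<^sub>R f r)"

definition cadlag_on_nonneg :: "(real \<Rightarrow> real) \<Rightarrow> bool" where
  "cadlag_on_nonneg f \<longleftrightarrow> (\<forall>t\<ge>0. continuous (at_right t) f) \<and>
                           (\<forall>t>0. \<exists>l. (f \<longlongrightarrow> l) (at_left t))"

text \<open>First jump time and the subsequent holding time (values in the extended reals;
  the infimum of the empty set is +oo).\<close>
definition E1 :: "(real \<Rightarrow> real) \<Rightarrow> ereal" where
  "E1 s = Inf (ereal ` {t. t \<ge> 0 \<and> s t \<noteq> s 0})"

definition E2 :: "(real \<Rightarrow> real) \<Rightarrow> ereal" where
  "E2 s = Inf (ereal ` {t. ereal t \<ge> E1 s \<and> s t \<noteq> s (real_of_ereal (E1 s))}) - E1 s"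

end

theory Submission
  imports Defs
begin


lemma param_data:
  assumes "param_of g B"
  obtains d where "d 0 = g" "\<And>n t. (d n has_vector_derivative d (Suc n) t) (at t)"
    "\<And>t. g (t + 1) = g t" "inj_on g {0..<1}" "\<And>t. d 1 t \<noteq> 0" "B = g ` {0..1}"
    "\<And>t. vector_derivative g (at t) = d 1 t"
proof -
  from assms obtain d where d: "d 0 = g" "\<forall>n t. (d n has_vector_derivative d (Suc n) t) (at t)"
    and p: "\<forall>t. g (t + 1) = g t" "inj_on g {0..<1}" "\<forall>t. vector_derivative g (at t) \<noteq> 0"
    and B: "B = g ` {0..1}"
    unfolding param_of_def smooth_closed_param_def by blast
  have vd: "\<And>t. vector_derivative g (at t) = d 1 t"
    using d by (metis One_nat_def vector_derivative_at)
  show ?thesis using d p B vd by (intro that) auto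
qed

lemma hvd_cont: "(f has_vector_derivative f') (at t) \<Longrightarrow> isCont f t"
  unfolding has_vector_derivative_def by (rule has_derivative_continuous)

lemma param_cont:
  assumes "param_of g B" shows "continuous_on UNIV g"
proof -
  obtain d where "d 0 = g" "\<And>n t. (d n has_vector_derivative d (Suc n) t) (at t)"
    using param_data[OF assms] by metis
  then show ?thesis by (metis continuous_at_imp_continuous_on hvd_cont)
qed

lemma param_per_int:
  assumes "param_of g B" shows "g (t + of_int k) = g t"
proof -
  have p: "\<And>t. g (t + 1) = g t" using param_data[OF assms] by metis
  have n: "g (t + of_nat n) = g t" for t n
    by (induction n) (auto simp: p[of "t + of_nat _", symmetric] add.assoc algebra_simps)
  show ?thesis
  proof (cases "k \<ge> 0")
    case True then show ?thesis using n[of t "nat k"] by simp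
  next
    case False
    have "g (t + of_int k) = g (t + of_int k + of_nat (nat (-k)))" using n by metis
    then show ?thesis using False by simp
  qed
qed

lemma param_frac:
  assumes "param_of g B" shows "g t = g (frac t)"
  using param_per_int[OF assms, of "frac t" "\<lfloor>t\<rfloor>"] by (simp add: frac_def)

lemma param_range:
  assumes "param_of g B" shows "B = range g"
proof -
  have B: "B = g ` {0..1}" using param_data[OF assms] by metis
  show ?thesis unfolding B
  proof
    show "range g \<subseteq> g ` {0..1}"
    proof
      fix p assume "p \<in> range g"
      then obtain t where "p = g t" by auto
      then have "p = g (frac t)" using param_frac[OF assms] by simp
      moreover have "frac t \<in> {0..1}" using frac_lt_1[of t] frac_ge_0[of t] by auto
      ultimately show "p \<in> g ` {0..1}" by auto
    qed
  qed auto
qed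

lemma param_compact:
  assumes "param_of g B" shows "compact B"
proof -
  have B: "B = g ` {0..1}" using param_data[OF assms] by metis
  show ?thesis unfolding B
    by (rule compact_continuous_image) (use param_cont[OF assms] continuous_on_subset in auto)
qed

lemma param_modinj:
  assumes "param_of g B" "g s1 = g s2" shows "s1 - s2 \<in> \<int>"
proof -
  have inj: "inj_on g {0..<1}" using param_data[OF assms(1)] by metis
  have "g (frac s1) = g (frac s2)" using assms param_frac[OF assms(1)] by metis
  moreover have "frac s1 \<in> {0..<1}" "frac s2 \<in> {0..<1}"
    using frac_lt_1 frac_ge_0 by auto
  ultimately have "frac s1 = frac s2" using inj by (auto dest: inj_onD)
  then have "s1 - s2 = of_int (\<lfloor>s1\<rfloor> - \<lfloor>s2\<rfloor>)" by (simp add: frac_def)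
  then show ?thesis by (metis Ints_of_int)
qed



lemma param_deriv:
  assumes "param_of g B"
  shows "(g has_vector_derivative vector_derivative g (at s)) (at s)"
    "isCont (\<lambda>s. vector_derivative g (at s)) s"
    "vector_derivative g (at s) \<noteq> 0"
proof -
  obtain d where d: "d 0 = g" "\<And>n t. (d n has_vector_derivative d (Suc n) t) (at t)"
    "\<And>t. d 1 t \<noteq> 0" "\<And>t. vector_derivative g (at t) = d 1 t"
    using param_data[OF assms] by metis
  have e: "(\<lambda>s. vector_derivative g (at s)) = d 1" using d(4) by auto
  show "(g has_vector_derivative vector_derivative g (at s)) (at s)"
    using d(2)[of 0 s] d(1) d(4)[of s] by simp
  show "isCont (\<lambda>s. vector_derivative g (at s)) s"
    unfolding e using d(2)[of 1 s] by (rule hvd_cont)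
  show "vector_derivative g (at s) \<noteq> 0" using d(3,4) by simp
qed

lemma mvt_bound:
  fixes \<phi> \<phi>' :: "real \<Rightarrow> real"
  assumes "a \<le> b" and der: "\<And>\<xi>. a \<le> \<xi> \<Longrightarrow> \<xi> \<le> b \<Longrightarrow> (\<phi> has_real_derivative \<phi>' \<xi>) (at \<xi>)"
    and bd: "\<And>\<xi>. a \<le> \<xi> \<Longrightarrow> \<xi> \<le> b \<Longrightarrow> lo \<le> \<phi>' \<xi> \<and> \<phi>' \<xi> \<le> hi"
  shows "lo * (b - a) \<le> \<phi> b - \<phi> a \<and> \<phi> b - \<phi> a \<le> hi * (b - a)"
proof (cases "a = b")
  case False
  then have "a < b" using assms by auto
  then obtain z where z: "a < z" "z < b" "\<phi> b - \<phi> a = (b - a) * \<phi>' z"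
    using MVT2[of a b \<phi> \<phi>'] der by blast
  have "lo \<le> \<phi>' z" "\<phi>' z \<le> hi" using bd z by auto
  then show ?thesis using z \<open>a < b\<close> by (auto simp: mult.commute intro: mult_right_mono)
qed simp

lemma local_struct:
  fixes t0 :: real
  assumes par: "param_of g B" and eta: "0 < \<eta>" "\<eta> \<le> 1"
    and T_def: "T = vector_derivative g (at t0)"
    and c_def: "c = norm T"
    and u_def: "u = T / of_real c"
  shows "\<exists>\<delta>0 \<rho>0. 0 < \<delta>0 \<and> \<delta>0 < 1/2 \<and> 0 < \<rho>0 \<and>
     (\<forall>s. \<bar>s - t0\<bar> \<le> \<delta>0 \<longrightarrow> \<bar>Im (cnj u * (g s - g t0))\<bar> \<le> \<eta> * \<bar>Re (cnj u * (g s - g t0))\<bar>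
                                \<and> c/2 * \<bar>s - t0\<bar> \<le> \<bar>Re (cnj u * (g s - g t0))\<bar>) \<and>
     (\<forall>s1 s2. t0 - \<delta>0 \<le> s1 \<longrightarrow> s1 < s2 \<longrightarrow> s2 \<le> t0 + \<delta>0 \<longrightarrow>
          Re (cnj u * (g s1 - g t0)) < Re (cnj u * (g s2 - g t0))) \<and>
     (\<forall>p\<in>B. dist p (g t0) < \<rho>0 \<longrightarrow> (\<exists>s. \<bar>s - t0\<bar> < \<delta>0 \<and> p = g s))"
proof -
  define g' where "g' s = vector_derivative g (at s)" for s
  have gd: "(g has_vector_derivative g' s) (at s)" for s using param_deriv[OF par] g'_def by auto
  have g'c: "isCont g' t0" using param_deriv[OF par] unfolding g'_def by auto
  have cpos: "c > 0" using param_deriv(3)[OF par] unfolding c_def T_def by auto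
  have cuT: "cnj u * T = of_real c"
  proof -
    have "cnj u * T = cnj T * T / of_real c" unfolding u_def by (simp add: complex_cnj_divide)
    also have "\<dots> = of_real (c\<^sup>2) / of_real c"
    proof -
      have "cnj T * T = of_real (c\<^sup>2)" unfolding c_def using complex_norm_square[of T]
        by (simp only: mult.commute)
      then show ?thesis by simp
    qed
    also have "\<dots> = of_real c" using cpos by (simp add: power2_eq_square)
    finally show ?thesis .
  qed
  have nu: "norm u = 1" unfolding u_def c_def using cpos c_def by (simp add: norm_divide)
  define \<epsilon> where "\<epsilon> = \<eta> * c / 4"
  have epos: "\<epsilon> > 0" using eta cpos by (simp add: \<epsilon>_def)
  obtain \<delta>1 where d1: "\<delta>1 > 0" "\<And>s. dist s t0 < \<delta>1 \<Longrightarrow> dist (g' s) (g' t0) < \<epsilon>"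
    using g'c epos unfolding continuous_at_eps_delta by metis
  define \<delta>0 where "\<delta>0 = min (\<delta>1 / 2) (1/4)"
  have d0: "0 < \<delta>0" "\<delta>0 < 1/2" "\<delta>0 < \<delta>1" using d1 by (auto simp: \<delta>0_def)
  define G where "G s = cnj u * (g s - g t0)" for s
  have Gd: "(G has_vector_derivative cnj u * g' s) (at s)" for s
    unfolding G_def using gd[of s]
    by (auto intro!: derivative_eq_intros)
  have ReGd: "((\<lambda>s. Re (G s)) has_real_derivative Re (cnj u * g' s)) (at s)" for s
    by (rule has_field_derivative_Re[OF Gd])
  have ImGd: "((\<lambda>s. Im (G s)) has_real_derivative Im (cnj u * g' s)) (at s)" for s
    by (rule has_field_derivative_Im[OF Gd])
  have dbound: "c/2 \<le> Re (cnj u * g' s) \<and> Re (cnj u * g' s) \<le> 2 * c \<and>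
                 - (\<eta> * c / 4) \<le> Im (cnj u * g' s) \<and> Im (cnj u * g' s) \<le> \<eta> * c / 4"
    if "\<bar>s - t0\<bar> \<le> \<delta>0" for s
  proof -
    have "dist s t0 < \<delta>1" using that d0 by (simp add: dist_real_def)
    then have "norm (g' s - T) < \<epsilon>" using d1(2) unfolding T_def g'_def dist_norm by auto
    moreover have "cnj u * g' s - of_real c = cnj u * (g' s - T)" using cuT by (simp add: algebra_simps)
    moreover have "norm (cnj u * (g' s - T)) = norm (g' s - T)" using nu by (simp add: norm_mult)
    ultimately have n: "norm (cnj u * g' s - of_real c) < \<epsilon>" by simp
    have "\<bar>Re (cnj u * g' s) - c\<bar> < \<epsilon>" "\<bar>Im (cnj u * g' s)\<bar> < \<epsilon>"
      using abs_Re_le_cmod[of "cnj u * g' s - of_real c"] abs_Im_le_cmod[of "cnj u * g' s - of_real c"] n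
      by auto
    moreover have "\<epsilon> \<le> c / 4" using eta cpos by (simp add: \<epsilon>_def)
    ultimately show ?thesis using cpos by (simp only: \<epsilon>_def abs_less_iff) linarith
  qed
  have G0: "G t0 = 0" by (simp add: G_def)
  have cone: "\<bar>Im (G s)\<bar> \<le> \<eta> * \<bar>Re (G s)\<bar> \<and> c/2 * \<bar>s - t0\<bar> \<le> \<bar>Re (G s)\<bar>"
    if s: "\<bar>s - t0\<bar> \<le> \<delta>0" for s
  proof (cases "t0 \<le> s")
    case True
    have R: "c/2 * (s - t0) \<le> Re (G s) - Re (G t0) \<and> Re (G s) - Re (G t0) \<le> 2 * c * (s - t0)"
      by (rule mvt_bound[OF True ReGd]) (use dbound s in auto)
    have I: "- (\<eta> * c / 4) * (s - t0) \<le> Im (G s) - Im (G t0) \<and> Im (G s) - Im (G t0) \<le> \<eta> * c / 4 * (s - t0)"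
      by (rule mvt_bound[OF True ImGd]) (use dbound s in auto)
    have "\<bar>Im (G s)\<bar> \<le> \<eta> * c / 4 * (s - t0)" using I G0 by auto
    also have "\<dots> \<le> \<eta> * (c/2 * (s - t0))" using eta cpos True by (simp add: mult_right_mono)
    also have "\<dots> \<le> \<eta> * \<bar>Re (G s)\<bar>" using R G0 eta by (intro mult_left_mono) auto
    finally show ?thesis using R G0 True by auto
  next
    case False
    then have F: "s \<le> t0" by auto
    have R: "c/2 * (t0 - s) \<le> Re (G t0) - Re (G s) \<and> Re (G t0) - Re (G s) \<le> 2 * c * (t0 - s)"
      by (rule mvt_bound[OF F ReGd]) (use dbound s in auto)
    have I: "- (\<eta> * c / 4) * (t0 - s) \<le> Im (G t0) - Im (G s) \<and> Im (G t0) - Im (G s) \<le> \<eta> * c / 4 * (t0 - s)"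
      by (rule mvt_bound[OF F ImGd]) (use dbound s in auto)
    have "\<bar>Im (G s)\<bar> \<le> \<eta> * c / 4 * (t0 - s)" using I G0 by auto
    also have "\<dots> \<le> \<eta> * (c/2 * (t0 - s))" using eta cpos F by (simp add: mult_right_mono)
    also have "\<dots> \<le> \<eta> * \<bar>Re (G s)\<bar>" using R G0 eta by (intro mult_left_mono) auto
    finally show ?thesis using R G0 F by auto
  qed
  have mono: "Re (G s1) < Re (G s2)" if "t0 - \<delta>0 \<le> s1" "s1 < s2" "s2 \<le> t0 + \<delta>0" for s1 s2
  proof -
    have "c/2 * (s2 - s1) \<le> Re (G s2) - Re (G s1) \<and> Re (G s2) - Re (G s1) \<le> 2 * c * (s2 - s1)"
      by (rule mvt_bound[OF _ ReGd]) (use dbound that in auto)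
    moreover have "c/2 * (s2 - s1) > 0" using cpos that by auto
    ultimately show ?thesis by linarith
  qed
  define K where "K = g ` ({t0 - 1/2 .. t0 + 1/2} - {t0 - \<delta>0 <..< t0 + \<delta>0})"
  have "compact K" unfolding K_def
  proof (rule compact_continuous_image)
    show "continuous_on ({t0 - 1/2 .. t0 + 1/2} - {t0 - \<delta>0 <..< t0 + \<delta>0}) g"
      using param_cont[OF par] continuous_on_subset by blast
    show "compact ({t0 - 1/2 .. t0 + 1/2} - {t0 - \<delta>0 <..< t0 + \<delta>0})"
      by (intro compact_diff) auto
  qed
  moreover have "g t0 \<notin> K"
  proof
    assume "g t0 \<in> K"
    then obtain s where s: "s \<in> {t0 - 1/2 .. t0 + 1/2}" "s \<notin> {t0 - \<delta>0 <..< t0 + \<delta>0}" "g s = g t0"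
      unfolding K_def by auto
    then have "s - t0 \<in> \<int>" using param_modinj[OF par] by blast
    then obtain k where k: "s - t0 = of_int k" by (auto elim: Ints_cases)
    have "\<bar>of_int k :: real\<bar> \<le> 1/2" using s(1) k by auto
    then have "k = 0" by linarith
    then show False using s(2) k d0 by auto
  qed
  ultimately obtain \<rho>0 where r0: "\<rho>0 > 0" "\<And>q. q \<in> K \<Longrightarrow> \<rho>0 \<le> dist (g t0) q"
    using separate_point_closed[of K "g t0"] compact_imp_closed by metis
  have near: "\<exists>s. \<bar>s - t0\<bar> < \<delta>0 \<and> p = g s" if p: "p \<in> B" "dist p (g t0) < \<rho>0" for p
  proof -
    obtain s' where s': "p = g s'" using p param_range[OF par] by auto
    define k where "k = \<lfloor>s' - t0 + 1/2\<rfloor>"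
    define s where "s = s' - of_int k"
    have gs: "g s = p" unfolding s_def using param_per_int[OF par, of s' "- k"] s' by simp
    have srange: "t0 - 1/2 \<le> s" "s \<le> t0 + 1/2" unfolding s_def k_def
      using of_int_floor_le[of "s' - t0 + 1/2"] real_of_int_floor_add_one_gt[of "s' - t0 + 1/2"]
      by linarith+
    show ?thesis
    proof (rule ccontr)
      assume "\<not> ?thesis"
      then have "s \<notin> {t0 - \<delta>0 <..< t0 + \<delta>0}" using gs
        by (metis abs_diff_less_iff greaterThanLessThan_iff)
      then have "p \<in> K" unfolding K_def using srange gs by auto
      then show False using r0(2)[of p] p(2) by (simp add: dist_commute)
    qed
  qed
  show ?thesis
    apply (rule exI[of _ \<delta>0], rule exI[of _ \<rho>0])
    using d0 r0(1) cone mono near unfolding G_def by blast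
qed



lemma param_jordan:
  assumes par: "param_of g B"
  shows "frontier (inside B) = B" "frontier (outside B) = B"
proof -
  have B: "B = g ` {0..1}" and p1: "\<And>t. g (t + 1) = g t" using param_data[OF par] by metis+
  have sp: "simple_path g" unfolding simple_path_def path_def loop_free_def
  proof
    show "continuous_on {0..1} g" using param_cont[OF par] continuous_on_subset by blast
    show "\<forall>x\<in>{0..1}. \<forall>y\<in>{0..1}. g x = g y \<longrightarrow> x = y \<or> x = 0 \<and> y = 1 \<or> x = 1 \<and> y = 0"
    proof (intro ballI impI)
      fix a b :: real assume ab: "a \<in> {0..1}" "b \<in> {0..1}" "g a = g b"
      then have "a - b \<in> \<int>" using param_modinj[OF par] by blast
      then obtain k where k: "a - b = of_int k" by (auto elim: Ints_cases)
      have "\<bar>of_int k :: real\<bar> \<le> 1" using ab k by auto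
      then have "k \<in> {-1, 0, 1}" by auto
      then show "a = b \<or> a = 0 \<and> b = 1 \<or> a = 1 \<and> b = 0" using ab k by auto
    qed
  qed
  have cl: "pathfinish g = pathstart g" unfolding pathfinish_def pathstart_def using p1[of 0] by simp
  have pi: "path_image g = B" unfolding path_image_def B ..
  show "frontier (inside B) = B" "frontier (outside B) = B"
    using Jordan_inside_outside[OF sp cl] unfolding pi by auto
qed

lemma cc_inside:
  assumes "q \<in> inside S" "connected_component (- S) q p" shows "p \<in> inside S"
proof -
  have "connected_component_set (- S) p = connected_component_set (- S) q"
    using assms(2) connected_component_eq by (simp add: mem_Collect_eq)
  then show ?thesis using assms connected_component_in[OF assms(2)] unfolding inside_def by auto
qed

lemma cc_outside:
  assumes "q \<in> outside S" "connected_component (- S) q p" shows "p \<in> outside S"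
proof -
  have "connected_component_set (- S) p = connected_component_set (- S) q"
    using assms(2) connected_component_eq by (simp add: mem_Collect_eq)
  then show ?thesis using assms connected_component_in[OF assms(2)] unfolding outside_def by auto
qed

lemma conv_strict:
  fixes a1 a2 b1 b2 \<theta> :: real
  assumes "a1 > b1" "a2 > b2" "0 \<le> \<theta>" "\<theta> \<le> 1"
  shows "(1 - \<theta>) * a1 + \<theta> * a2 > (1 - \<theta>) * b1 + \<theta> * b2"
proof (cases "\<theta> < 1")
  case True
  have "(1 - \<theta>) * (a1 - b1) > 0" using True assms by auto
  moreover have "\<theta> * (a2 - b2) \<ge> 0" using assms by auto
  ultimately show ?thesis by (simp add: algebra_simps)
next
  case False
  then show ?thesis using assms by auto
qed

lemma tangent:
  assumes parh: "param_of h B" and ht: "h t1 = x"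
    and cone: "\<And>\<eta>. \<eta> > 0 \<Longrightarrow> \<exists>\<rho>>0. \<forall>p\<in>B. dist p x < \<rho> \<longrightarrow>
                 \<bar>Im (cnj u * (p - x))\<bar> \<le> \<eta> * \<bar>Re (cnj u * (p - x))\<bar>"
  shows "Im (cnj u * vector_derivative h (at t1)) = 0"
proof (rule ccontr)
  define D where "D = vector_derivative h (at t1)"
  assume "Im (cnj u * vector_derivative h (at t1)) \<noteq> 0"
  then have a: "\<bar>Im (cnj u * D)\<bar> > 0" unfolding D_def by simp
  define b where "b = \<bar>Re (cnj u * D)\<bar>"
  define \<eta> where "\<eta> = \<bar>Im (cnj u * D)\<bar> / (2 * (b + 1))"
  have bpos: "b \<ge> 0" unfolding b_def by simp
  have etapos: "\<eta> > 0" unfolding \<eta>_def using a bpos by auto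
  obtain \<rho> where rho: "\<rho> > 0" "\<And>p. p \<in> B \<Longrightarrow> dist p x < \<rho> \<Longrightarrow>
        \<bar>Im (cnj u * (p - x))\<bar> \<le> \<eta> * \<bar>Re (cnj u * (p - x))\<bar>"
    using cone[OF etapos] by blast
  have hd: "(h has_vector_derivative D) (at t1)" unfolding D_def using param_deriv(1)[OF parh] .
  define \<phi> where "\<phi> y = cnj u * (h y - x)" for y
  have \<phi>d: "(\<phi> has_vector_derivative cnj u * D) (at t1)"
    unfolding \<phi>_def using hd by (auto intro!: derivative_eq_intros)
  have \<phi>0: "\<phi> t1 = 0" unfolding \<phi>_def using ht by simp
  have lr: "((\<lambda>y. Re (\<phi> y) / (y - t1)) \<longlongrightarrow> Re (cnj u * D)) (at_right t1)"
  proof -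
    have "((\<lambda>y. (Re (\<phi> y) - Re (\<phi> t1)) / (y - t1)) \<longlongrightarrow> Re (cnj u * D)) (at t1)"
      using has_field_derivative_Re[OF \<phi>d] unfolding has_field_derivative_iff .
    then show ?thesis using \<phi>0 by (auto intro: tendsto_mono[OF at_le])
  qed
  have li: "((\<lambda>y. Im (\<phi> y) / (y - t1)) \<longlongrightarrow> Im (cnj u * D)) (at_right t1)"
  proof -
    have "((\<lambda>y. (Im (\<phi> y) - Im (\<phi> t1)) / (y - t1)) \<longlongrightarrow> Im (cnj u * D)) (at t1)"
      using has_field_derivative_Im[OF \<phi>d] unfolding has_field_derivative_iff .
    then show ?thesis using \<phi>0 by (auto intro: tendsto_mono[OF at_le])
  qed
  have hc: "isCont h t1" using param_cont[OF parh] by (simp add: continuous_on_eq_continuous_at)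
  then have "eventually (\<lambda>y. dist (h y) x < \<rho>) (at t1)"
    using rho(1) ht unfolding isCont_def by (metis tendsto_iff)
  then have ev1: "eventually (\<lambda>y. dist (h y) x < \<rho>) (at_right t1)"
    by (rule filter_leD[OF at_le, rotated]) simp
  have ev2: "eventually (\<lambda>y. y > t1) (at_right t1)" by (simp add: eventually_at_right_less)
  have hB: "h y \<in> B" for y using param_range[OF parh] by auto
  have ev: "eventually (\<lambda>y. \<bar>Im (\<phi> y) / (y - t1)\<bar> \<le> \<eta> * \<bar>Re (\<phi> y) / (y - t1)\<bar>) (at_right t1)"
    using ev1 ev2
  proof eventually_elim
    case (elim y)
    have "\<bar>Im (\<phi> y)\<bar> \<le> \<eta> * \<bar>Re (\<phi> y)\<bar>" unfolding \<phi>_def using rho(2)[OF hB elim(1)] .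
    then have "\<bar>Im (\<phi> y)\<bar> / (y - t1) \<le> \<eta> * \<bar>Re (\<phi> y)\<bar> / (y - t1)"
      using elim(2) by (intro divide_right_mono) auto
    moreover have d: "y - t1 > 0" using elim(2) by simp
    ultimately show ?case by (simp only: abs_div_pos[OF d] times_divide_eq_right[symmetric])
  qed
  have "\<bar>Im (cnj u * D)\<bar> \<le> \<eta> * \<bar>Re (cnj u * D)\<bar>"
    by (rule tendsto_le[OF _ tendsto_mult_left[OF tendsto_rabs[OF lr]] tendsto_rabs[OF li] ev]) simp
  also have "\<dots> = \<bar>Im (cnj u * D)\<bar> * (b / (2 * (b + 1)))" unfolding \<eta>_def b_def by simp
  also have "\<dots> < \<bar>Im (cnj u * D)\<bar> * 1"
    using a bpos by (intro mult_strict_left_mono) auto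
  finally show False by simp
qed



lemma normal_norm:
  assumes par: "param_of g B" and xB: "x \<in> B"
  shows "norm (inward_normal B x) = 1"
proof -
  obtain t0 where x: "x = g t0" using xB param_range[OF par] by auto
  define T where "T = vector_derivative g (at t0)"
  define c where "c = norm T"
  define u where "u = T / of_real c"
  have cpos: "c > 0" using param_deriv(3)[OF par] by (simp add: c_def T_def)
  have nu: "norm u = 1" unfolding u_def c_def using cpos c_def by (simp add: norm_divide)
  have ucu: "u * cnj u = 1" using complex_norm_square[of u] nu by simp
  define R where "R p = cnj u * (p - x)" for p
  have Rinv: "x + u * R p = p" for p
  proof -
    have "u * R p = (u * cnj u) * (p - x)" unfolding R_def by (simp add: algebra_simps)
    then show ?thesis using ucu by simp
  qed
  have Rdist: "dist p x = norm (R p)" for p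
    unfolding R_def dist_norm norm_mult using nu by simp
  have Rinj: "p = q" if "R p = R q" for p q
  proof -
    have "p = x + u * R p" using Rinv[of p] by (rule sym)
    also have "\<dots> = x + u * R q" using that by (rule arg_cong)
    also have "\<dots> = q" by (rule Rinv)
    finally show ?thesis .
  qed
  have Rseg: "R ((1 - \<theta>) *\<^sub>R a + \<theta> *\<^sub>R b) = (1 - \<theta>) *\<^sub>R R a + \<theta> *\<^sub>R R b" for \<theta> a b
    unfolding R_def scaleR_conv_of_real by (simp add: algebra_simps)
  define pt where "pt \<sigma> e = x + u * (\<i> * of_real (\<sigma> * e))" for \<sigma> e :: real
  have Rpt: "R (pt \<sigma> e) = \<i> * of_real (\<sigma> * e)" for \<sigma> e
  proof -
    have "R (pt \<sigma> e) = (cnj u * u) * (\<i> * of_real (\<sigma> * e))" unfolding R_def pt_def by simp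
    then show ?thesis using ucu by (simp add: mult.commute)
  qed
  have cone: "\<exists>\<rho>>0. \<forall>p\<in>B. dist p x < \<rho> \<longrightarrow> \<bar>Im (cnj u * (p - x))\<bar> \<le> \<eta> * \<bar>Re (cnj u * (p - x))\<bar>"
    if eta: "\<eta> > 0" for \<eta>
  proof -
    obtain \<delta>0 \<rho>0 where st0: "0 < \<rho>0"
      and st1: "\<forall>s. \<bar>s - t0\<bar> \<le> \<delta>0 \<longrightarrow> \<bar>Im (cnj u * (g s - g t0))\<bar> \<le> min \<eta> 1 * \<bar>Re (cnj u * (g s - g t0))\<bar>
                                \<and> c/2 * \<bar>s - t0\<bar> \<le> \<bar>Re (cnj u * (g s - g t0))\<bar>"
      and st3: "\<forall>p\<in>B. dist p (g t0) < \<rho>0 \<longrightarrow> (\<exists>s. \<bar>s - t0\<bar> < \<delta>0 \<and> p = g s)"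
      using local_struct[OF par _ _ T_def c_def u_def, of "min \<eta> 1"] eta by auto
    have st: "0 < \<rho>0"
      "\<And>s. \<bar>s - t0\<bar> \<le> \<delta>0 \<Longrightarrow> \<bar>Im (cnj u * (g s - g t0))\<bar> \<le> min \<eta> 1 * \<bar>Re (cnj u * (g s - g t0))\<bar>"
      "\<And>p. p \<in> B \<Longrightarrow> dist p (g t0) < \<rho>0 \<Longrightarrow> (\<exists>s. \<bar>s - t0\<bar> < \<delta>0 \<and> p = g s)"
      using st0 st1 st3 by auto
    show ?thesis
    proof (intro exI[of _ \<rho>0] conjI ballI impI)
      fix p assume p: "p \<in> B" "dist p x < \<rho>0"
      then obtain s where s: "\<bar>s - t0\<bar> < \<delta>0" "p = g s" using st(3) x by auto
      have "\<bar>Im (cnj u * (p - x))\<bar> \<le> min \<eta> 1 * \<bar>Re (cnj u * (p - x))\<bar>" using st(2)[of s] s x by auto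
      also have "\<dots> \<le> \<eta> * \<bar>Re (cnj u * (p - x))\<bar>" by (intro mult_right_mono) auto
      finally show "\<bar>Im (cnj u * (p - x))\<bar> \<le> \<eta> * \<bar>Re (cnj u * (p - x))\<bar>" .
    qed (use st in auto)
  qed
  have Rg: "R (g s) = cnj u * (g s - g t0)" for s by (simp add: R_def x)
  obtain \<delta>0 \<rho>0 where d0: "0 < \<delta>0" "\<delta>0 < 1/2" "0 < \<rho>0"
    and cone2': "\<forall>s. \<bar>s - t0\<bar> \<le> \<delta>0 \<longrightarrow> \<bar>Im (cnj u * (g s - g t0))\<bar> \<le> 1/2 * \<bar>Re (cnj u * (g s - g t0))\<bar>
                                \<and> c/2 * \<bar>s - t0\<bar> \<le> \<bar>Re (cnj u * (g s - g t0))\<bar>"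
    and mono': "\<forall>s1 s2. t0 - \<delta>0 \<le> s1 \<longrightarrow> s1 < s2 \<longrightarrow> s2 \<le> t0 + \<delta>0 \<longrightarrow>
          Re (cnj u * (g s1 - g t0)) < Re (cnj u * (g s2 - g t0))"
    and near': "\<forall>p\<in>B. dist p (g t0) < \<rho>0 \<longrightarrow> (\<exists>s. \<bar>s - t0\<bar> < \<delta>0 \<and> p = g s)"
    using local_struct[OF par _ _ T_def c_def u_def, of "1/2"] by auto
  have cone2: "\<And>s. \<bar>s - t0\<bar> \<le> \<delta>0 \<Longrightarrow> \<bar>Im (R (g s))\<bar> \<le> 1/2 * \<bar>Re (R (g s))\<bar>
                              \<and> c/2 * \<bar>s - t0\<bar> \<le> \<bar>Re (R (g s))\<bar>"
    unfolding Rg using cone2' by blast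
  have mono: "\<And>s1 s2. t0 - \<delta>0 \<le> s1 \<Longrightarrow> s1 < s2 \<Longrightarrow> s2 \<le> t0 + \<delta>0 \<Longrightarrow> Re (R (g s1)) < Re (R (g s2))"
    unfolding Rg using mono' by blast
  have near: "\<And>p. p \<in> B \<Longrightarrow> dist p x < \<rho>0 \<Longrightarrow> (\<exists>s. \<bar>s - t0\<bar> < \<delta>0 \<and> p = g s)"
    using near' x by blast
  have monoeq: "s1 = s2" if "\<bar>s1 - t0\<bar> \<le> \<delta>0" "\<bar>s2 - t0\<bar> \<le> \<delta>0" "Re (R (g s1)) = Re (R (g s2))" for s1 s2
    using mono[of s1 s2] mono[of s2 s1] that by (cases s1 s2 rule: linorder_cases) (auto simp: abs_le_iff)
  define A0 where "A0 = c/2 * \<delta>0"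
  have A0pos: "A0 > 0" unfolding A0_def using cpos d0 by auto
  have Rg0: "R (g t0) = 0" unfolding R_def x by simp
  have Aplus: "Re (R (g (t0 + \<delta>0))) \<ge> A0"
    using cone2[of "t0 + \<delta>0"] mono[of t0 "t0 + \<delta>0"] d0 Rg0 unfolding A0_def by auto
  have Aminus: "Re (R (g (t0 - \<delta>0))) \<le> - A0"
    using cone2[of "t0 - \<delta>0"] mono[of "t0 - \<delta>0" t0] d0 Rg0 unfolding A0_def by auto
  define \<rho>1 where "\<rho>1 = min \<rho>0 A0 / 4"
  have r1: "\<rho>1 > 0" "\<rho>1 < \<rho>0" "4 * \<rho>1 \<le> A0" "4 * \<rho>1 \<le> \<rho>0" using d0 A0pos unfolding \<rho>1_def by auto
  \<comment> \<open>the two half-cones avoid B and are convex\<close>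
  have HB: "q \<notin> B" if hs: "\<sigma> \<in> {1, -1}" "dist q x < \<rho>0" "\<sigma> * Im (R q) > \<bar>Re (R q)\<bar> / 2" for \<sigma> q
  proof
    assume "q \<in> B"
    then obtain s where s: "\<bar>s - t0\<bar> < \<delta>0" "q = g s" using near hs(2) by auto
    have "\<bar>Im (R q)\<bar> \<le> 1/2 * \<bar>Re (R q)\<bar>" using cone2[of s] s by auto
    moreover have "\<sigma> * Im (R q) \<le> \<bar>Im (R q)\<bar>" using hs(1) by auto
    ultimately show False using hs(3) by auto
  qed
  have Hconn: "connected_component (- B) q1 q2"
    if s: "\<sigma> \<in> {1, -1}" and q1: "dist q1 x < \<rho>0" "\<sigma> * Im (R q1) > \<bar>Re (R q1)\<bar> / 2"
      and q2: "dist q2 x < \<rho>0" "\<sigma> * Im (R q2) > \<bar>Re (R q2)\<bar> / 2" for \<sigma> q1 q2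
  proof (rule connected_componentI[OF connected_segment])
    show "closed_segment q1 q2 \<subseteq> - B"
    proof
      fix q assume q: "q \<in> closed_segment q1 q2"
      then obtain \<theta> where th: "0 \<le> \<theta>" "\<theta> \<le> 1" "q = (1 - \<theta>) *\<^sub>R q1 + \<theta> *\<^sub>R q2"
        unfolding closed_segment_def by auto
      have "q \<in> ball x \<rho>0"
        using closed_segment_subset[OF _ _ convex_ball, of q1 x \<rho>0 q2] q q1 q2
        by (auto simp: dist_commute)
      then have dq: "dist q x < \<rho>0" by (simp add: dist_commute)
      have Rq: "R q = (1 - \<theta>) *\<^sub>R R q1 + \<theta> *\<^sub>R R q2" using th Rseg by simp
      have E1: "\<sigma> * Im (R q) = (1 - \<theta>) * (\<sigma> * Im (R q1)) + \<theta> * (\<sigma> * Im (R q2))"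
        unfolding Rq by (simp add: algebra_simps)
      have E2: "(1 - \<theta>) * (\<sigma> * Im (R q1)) + \<theta> * (\<sigma> * Im (R q2)) > (1 - \<theta>) * (\<bar>Re (R q1)\<bar> / 2) + \<theta> * (\<bar>Re (R q2)\<bar> / 2)"
        by (rule conv_strict) (use q1 q2 th in auto)
      have E3: "(1 - \<theta>) * (\<bar>Re (R q1)\<bar> / 2) + \<theta> * (\<bar>Re (R q2)\<bar> / 2) \<ge> \<bar>Re (R q)\<bar> / 2"
      proof -
        have "\<bar>Re (R q)\<bar> = \<bar>(1 - \<theta>) * Re (R q1) + \<theta> * Re (R q2)\<bar>" unfolding Rq by simp
        also have "\<dots> \<le> \<bar>(1 - \<theta>) * Re (R q1)\<bar> + \<bar>\<theta> * Re (R q2)\<bar>" by (rule abs_triangle_ineq)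
        also have "\<dots> = (1 - \<theta>) * \<bar>Re (R q1)\<bar> + \<theta> * \<bar>Re (R q2)\<bar>" using th by (simp add: abs_mult)
        finally show ?thesis by simp
      qed
      have "\<sigma> * Im (R q) > \<bar>Re (R q)\<bar> / 2" using E1 E2 E3 by linarith
      then show "q \<in> - B" using HB[OF s dq] by auto
    qed
  qed auto
  have ptH: "dist (pt \<sigma> e) x < \<rho>0 \<and> \<sigma> * Im (R (pt \<sigma> e)) > \<bar>Re (R (pt \<sigma> e))\<bar> / 2"
    if "\<sigma> \<in> {1, -1}" "0 < e" "e < \<rho>0" for \<sigma> e
    using that unfolding Rdist Rpt by (auto simp: norm_mult)
  have All: "\<exists>\<sigma>\<in>{1, -1}. connected_component (- B) p (pt \<sigma> (\<rho>1 / 2))"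
    if p: "p \<notin> B" "dist p x < \<rho>1" for p
  proof -
    define \<alpha> where "\<alpha> = Re (R p)"
    define \<beta> where "\<beta> = Im (R p)"
    have ab: "\<bar>\<alpha>\<bar> < \<rho>1" "\<bar>\<beta>\<bar> < \<rho>1"
      using p(2) abs_Re_le_cmod[of "R p"] abs_Im_le_cmod[of "R p"] unfolding Rdist \<alpha>_def \<beta>_def by auto
    have ref: "connected_component (- B) q (pt \<sigma> (\<rho>1 / 2))"
      if "\<sigma> \<in> {1, -1}" "dist q x < \<rho>0" "\<sigma> * Im (R q) > \<bar>Re (R q)\<bar> / 2" for \<sigma> q
      by (rule Hconn[OF that(1) that(2,3)]) (use ptH[OF that(1), of "\<rho>1 / 2"] r1 in auto)
    consider "\<beta> > \<bar>\<alpha>\<bar> / 2" | "-1 * \<beta> > \<bar>\<alpha>\<bar> / 2" | "\<bar>\<beta>\<bar> \<le> \<bar>\<alpha>\<bar> / 2" by linarith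
    then show ?thesis
    proof cases
      case 1
      then show ?thesis using ref[of 1 p] p r1 unfolding \<alpha>_def \<beta>_def by auto
    next
      case 2
      then show ?thesis using ref[of "-1" p] p r1 unfolding \<alpha>_def \<beta>_def by auto
    next
      case 3
      have a0: "\<alpha> \<noteq> 0"
      proof
        assume "\<alpha> = 0"
        then have "\<beta> = 0" using 3 by auto
        then have "R p = 0" using \<open>\<alpha> = 0\<close> unfolding \<alpha>_def \<beta>_def by (simp add: complex_eq_iff)
        then have "p = x" using Rinv[of p] by simp
        then show False using p xB by simp
      qed
      have "\<exists>s. t0 - \<delta>0 \<le> s \<and> s \<le> t0 + \<delta>0 \<and> Re (R (g s)) = \<alpha>"
      proof (rule IVT')
        show "Re (R (g (t0 - \<delta>0))) \<le> \<alpha>" "\<alpha> \<le> Re (R (g (t0 + \<delta>0)))"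
          using Aplus Aminus ab r1 by auto
        show "t0 - \<delta>0 \<le> t0 + \<delta>0" using d0 by auto
        show "continuous_on {t0 - \<delta>0..t0 + \<delta>0} (\<lambda>s. Re (R (g s)))"
          unfolding R_def using param_cont[OF par]
          by (intro continuous_intros) (auto intro: continuous_on_subset)
      qed
      then obtain s where s0: "t0 - \<delta>0 \<le> s" "s \<le> t0 + \<delta>0" "Re (R (g s)) = \<alpha>" by blast
      have s: "\<bar>s - t0\<bar> \<le> \<delta>0" "Re (R (g s)) = \<alpha>" using s0 by auto
      define \<beta>0 where "\<beta>0 = Im (R (g s))"
      have b0: "\<bar>\<beta>0\<bar> \<le> \<bar>\<alpha>\<bar> / 2" using cone2[OF s(1)] s(2) unfolding \<beta>0_def by auto
      have "\<beta> \<noteq> \<beta>0"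
      proof
        assume "\<beta> = \<beta>0"
        then have "R p = R (g s)" using s(2) unfolding \<alpha>_def \<beta>_def \<beta>0_def by (simp add: complex_eq_iff)
        then have "p = g s" by (rule Rinj)
        then show False using p param_range[OF par] by auto
      qed
      define \<sigma> :: real where "\<sigma> = (if \<beta> > \<beta>0 then 1 else -1)"
      have sig: "\<sigma> \<in> {1, -1}" unfolding \<sigma>_def by auto
      have sb: "\<sigma> * \<beta> > \<sigma> * \<beta>0" using \<open>\<beta> \<noteq> \<beta>0\<close> unfolding \<sigma>_def by auto
      have sa: "\<bar>\<alpha>\<bar> > \<sigma> * \<beta>0" using b0 a0 sig by auto
      define p' where "p' = x + u * Complex \<alpha> (\<sigma> * \<bar>\<alpha>\<bar>)"
      have Rp': "R p' = Complex \<alpha> (\<sigma> * \<bar>\<alpha>\<bar>)"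
      proof -
        have "R p' = (cnj u * u) * Complex \<alpha> (\<sigma> * \<bar>\<alpha>\<bar>)" unfolding R_def p'_def by simp
        then show ?thesis using ucu by (simp add: mult.commute)
      qed
      have Rp: "R p = Complex \<alpha> \<beta>" unfolding \<alpha>_def \<beta>_def by simp
      have p'H: "dist p' x < \<rho>0 \<and> \<sigma> * Im (R p') > \<bar>Re (R p')\<bar> / 2"
      proof
        have "dist p' x \<le> \<bar>\<alpha>\<bar> + \<bar>\<sigma> * \<bar>\<alpha>\<bar>\<bar>" unfolding Rdist Rp' using cmod_le[of "Complex \<alpha> (\<sigma> * \<bar>\<alpha>\<bar>)"] by simp
        also have "\<dots> = 2 * \<bar>\<alpha>\<bar>" using sig by auto
        finally show "dist p' x < \<rho>0" using ab r1 by auto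
        show "\<sigma> * Im (R p') > \<bar>Re (R p')\<bar> / 2" unfolding Rp' using sig a0 by auto
      qed
      have seg: "connected_component (- B) p p'"
      proof (rule connected_componentI[OF connected_segment])
        show "closed_segment p p' \<subseteq> - B"
        proof
          fix q assume q: "q \<in> closed_segment p p'"
          then obtain \<theta> where th: "0 \<le> \<theta>" "\<theta> \<le> 1" "q = (1 - \<theta>) *\<^sub>R p + \<theta> *\<^sub>R p'"
            unfolding closed_segment_def by auto
          have Rq: "R q = Complex \<alpha> ((1 - \<theta>) * \<beta> + \<theta> * (\<sigma> * \<bar>\<alpha>\<bar>))"
          proof -
            have Rq0: "R q = (1 - \<theta>) *\<^sub>R R p + \<theta> *\<^sub>R R p'" using Rseg[of \<theta> p p'] th(3) by simp
            show ?thesis unfolding Rq0 Rp Rp' by (simp add: complex_eq_iff algebra_simps)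
          qed
          show "q \<in> - B"
          proof
            assume qB: "q \<in> B"
            have "\<bar>(1 - \<theta>) * \<beta> + \<theta> * (\<sigma> * \<bar>\<alpha>\<bar>)\<bar> \<le> (1 - \<theta>) * \<bar>\<beta>\<bar> + \<theta> * \<bar>\<alpha>\<bar>"
              using th sig abs_triangle_ineq[of "(1 - \<theta>) * \<beta>" "\<theta> * (\<sigma> * \<bar>\<alpha>\<bar>)"]
              by (auto simp: abs_mult)
            also have "\<dots> \<le> (1 - \<theta>) * \<bar>\<alpha>\<bar> + \<theta> * \<bar>\<alpha>\<bar>"
              using th 3 by (intro add_mono mult_left_mono) auto
            also have "\<dots> = \<bar>\<alpha>\<bar>" by (simp add: algebra_simps)
            finally have "\<bar>(1 - \<theta>) * \<beta> + \<theta> * (\<sigma> * \<bar>\<alpha>\<bar>)\<bar> \<le> \<bar>\<alpha>\<bar>" .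
            then have "dist q x \<le> \<bar>\<alpha>\<bar> + \<bar>\<alpha>\<bar>"
              unfolding Rdist Rq using cmod_le[of "Complex \<alpha> ((1 - \<theta>) * \<beta> + \<theta> * (\<sigma> * \<bar>\<alpha>\<bar>))"] by simp
            then have "dist q x < \<rho>0" using ab r1 by auto
            then obtain s' where s': "\<bar>s' - t0\<bar> < \<delta>0" "q = g s'" using near qB by auto
            have "Re (R (g s')) = \<alpha>" using Rq s'(2) by simp
            then have "s' = s" using monoeq[of s' s] s s' by auto
            then have "(1 - \<theta>) * \<beta> + \<theta> * (\<sigma> * \<bar>\<alpha>\<bar>) = \<beta>0"
              using Rq s'(2) unfolding \<beta>0_def by simp
            then have "(1 - \<theta>) * (\<sigma> * \<beta>) + \<theta> * \<bar>\<alpha>\<bar> = \<sigma> * \<beta>0"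
              using sig by (auto simp: algebra_simps)
            moreover have "(1 - \<theta>) * (\<sigma> * \<beta>) + \<theta> * \<bar>\<alpha>\<bar> > (1 - \<theta>) * (\<sigma> * \<beta>0) + \<theta> * (\<sigma> * \<beta>0)"
              by (rule conv_strict) (use sb sa th in auto)
            ultimately show False by (simp add: algebra_simps)
          qed
        qed
      qed auto
      have "connected_component (- B) p' (pt \<sigma> (\<rho>1 / 2))" using ref[OF sig] p'H by auto
      then show ?thesis using seg sig connected_component_trans by blast
    qed
  qed
  have fr: "frontier (inside B) = B" "frontier (outside B) = B" using param_jordan[OF par] by auto
  have "x \<in> closure (inside B)" using fr(1) xB frontier_def by auto
  then obtain qi where qi: "qi \<in> inside B" "dist qi x < \<rho>1" using closure_approachable r1 by blast
  have "x \<in> closure (outside B)" using fr(2) xB frontier_def by auto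
  then obtain qo where qo: "qo \<in> outside B" "dist qo x < \<rho>1" using closure_approachable r1 by blast
  have qiB: "qi \<notin> B" using qi(1) inside_no_overlap[of B] by blast
  have qoB: "qo \<notin> B" using qo(1) outside_no_overlap[of B] by blast
  obtain \<sigma>1 where s1: "\<sigma>1 \<in> {1, -1}" "connected_component (- B) qi (pt \<sigma>1 (\<rho>1 / 2))"
    using All[OF qiB qi(2)] by blast
  obtain \<sigma>2 where s2: "\<sigma>2 \<in> {1, -1}" "connected_component (- B) qo (pt \<sigma>2 (\<rho>1 / 2))"
    using All[OF qoB qo(2)] by blast
  have in1: "pt \<sigma>1 (\<rho>1 / 2) \<in> inside B" using cc_inside[OF qi(1) s1(2)] .
  have out2: "pt \<sigma>2 (\<rho>1 / 2) \<in> outside B" using cc_outside[OF qo(1) s2(2)] .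
  have "\<sigma>1 \<noteq> \<sigma>2" using in1 out2 inside_Int_outside[of B] by (metis IntI empty_iff)
  then have s21: "\<sigma>2 = - \<sigma>1" using s1(1) s2(1) by auto
  have ptcc: "connected_component (- B) (pt \<sigma> (\<rho>1 / 2)) (pt \<sigma> e)"
    if "\<sigma> \<in> {1, -1}" "0 < e" "e < \<rho>1" for \<sigma> e
    by (rule Hconn[OF that(1)]) (use ptH[OF that(1), of "\<rho>1 / 2"] ptH[OF that(1), of e] that r1 in auto)
  have inside_e: "pt \<sigma>1 e \<in> inside B" if "0 < e" "e < \<rho>1" for e
    using cc_inside[OF in1 ptcc[OF s1(1) that]] .
  have outside_e: "pt (- \<sigma>1) e \<in> outside B" if "0 < e" "e < \<rho>1" for e
    using cc_outside[OF out2 ptcc[OF s2(1) that]] s21 by simp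
  define v0 where "v0 = of_real \<sigma>1 * (\<i> * u)"
  have ptv: "x + of_real e * (of_real \<sigma> * (\<i> * u)) = pt \<sigma> e" for e \<sigma>
    unfolding pt_def by (simp add: algebra_simps)
  define P where "P v \<longleftrightarrow> norm v = 1 \<and>
      (\<exists>g t. param_of g B \<and> g t = x \<and> Re (cnj v * vector_derivative g (at t)) = 0) \<and>
      (\<forall>\<^sub>F e in at_right 0. x + of_real e * v \<in> inside B)" for v
  have Pv0: "P v0"
    unfolding P_def
  proof (intro conjI)
    show "norm v0 = 1" unfolding v0_def using s1(1) nu by (auto simp: norm_mult)
    have "Re (cnj v0 * T) = 0"
    proof -
      have "T = of_real c * u" unfolding u_def using cpos by simp
      then have "cnj v0 * T = of_real (\<sigma>1 * c) * (- \<i>) * (u * cnj u)" unfolding v0_def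
        by (simp add: algebra_simps)
      then show ?thesis using ucu by simp
    qed
    then show "\<exists>g t. param_of g B \<and> g t = x \<and> Re (cnj v0 * vector_derivative g (at t)) = 0"
      using par x unfolding T_def by blast
    show "\<forall>\<^sub>F e in at_right 0. x + of_real e * v0 \<in> inside B"
      unfolding eventually_at_right_field v0_def ptv using r1 inside_e by blast
  qed
  have uniq: "v = v0" if Pv: "P v" for v
  proof -
    from Pv obtain h t1 where nv: "norm v = 1" and h: "param_of h B" "h t1 = x"
      and hv: "Re (cnj v * vector_derivative h (at t1)) = 0"
      and ev: "\<forall>\<^sub>F e in at_right 0. x + of_real e * v \<in> inside B" unfolding P_def by blast
    define D where "D = vector_derivative h (at t1)"
    have Im0: "Im (cnj u * D) = 0" unfolding D_def by (rule tangent[OF h cone]) auto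
    define k where "k = Re (cnj u * D)"
    have kD: "D = u * of_real k"
    proof -
      have "cnj u * D = of_real k" using Im0 unfolding k_def by (simp add: complex_eq_iff)
      then have "u * (cnj u * D) = u * of_real k" by (rule arg_cong)
      moreover have "u * (cnj u * D) = D" using ucu by (metis mult.assoc mult_1)
      ultimately show ?thesis by simp
    qed
    have k0: "k \<noteq> 0" using kD param_deriv(3)[OF h(1), of t1] unfolding D_def by auto
    define z where "z = cnj v * u"
    have "Re (z * of_real k) = 0" using hv kD unfolding z_def D_def by (simp add: mult.assoc)
    then have Rez: "Re z = 0" using k0 by simp
    have nz: "norm z = 1" unfolding z_def using nv nu by (simp add: norm_mult)
    then have "\<bar>Im z\<bar> = 1" using Rez by (simp add: cmod_def)
    then have Imz: "Im z = 1 \<or> Im z = -1" by auto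
    have vz: "v = cnj z * u"
    proof -
      have "cnj z * u = v * (cnj u * u)" unfolding z_def by (simp add: algebra_simps)
      then show ?thesis using ucu by (simp add: mult.commute)
    qed
    have "cnj z = \<i> * of_real (- Im z)" using Rez by (simp add: complex_eq_iff)
    then have vform: "v = of_real (- Im z) * (\<i> * u)" using vz by (simp add: algebra_simps)
    show ?thesis
    proof (rule ccontr)
      assume "v \<noteq> v0"
      then have "- Im z = - \<sigma>1" using Imz s1(1) vform unfolding v0_def by auto
      then have vm: "v = of_real (- \<sigma>1) * (\<i> * u)" using vform by simp
      have "\<forall>\<^sub>F e in at_right (0::real). e < \<rho>1 \<and> 0 < e"
        using r1 by (auto simp: eventually_at_right_field)
      with ev have "\<forall>\<^sub>F e in at_right (0::real). False"
      proof eventually_elim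
        case (elim e)
        then have "pt (- \<sigma>1) e \<in> inside B" using vm ptv by metis
        moreover have "pt (- \<sigma>1) e \<in> outside B" using outside_e elim by auto
        ultimately show False using inside_Int_outside[of B] by blast
      qed
      then show False by (simp add: trivial_limit_at_right_real)
    qed
  qed
  have "inward_normal B x = v0"
    unfolding inward_normal_def using Pv0 uniq unfolding P_def by (rule the_equality) 
  then show ?thesis using Pv0 unfolding P_def by simp
qed



lemma LS_bound:
  fixes F :: "real \<Rightarrow> real" and f :: "real \<Rightarrow> complex"
  assumes cF: "continuous_on {0..} F" and mF: "mono_on {0..} F" and F0: "F 0 = 0" and t: "t \<ge> 0"
    and fb: "\<And>u. 0 < u \<Longrightarrow> u \<le> t \<Longrightarrow> norm (f u) \<le> 1"
  shows "norm (LS_integral F f t) \<le> F t"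
proof -
  define G where "G = (\<lambda>u. F (max 0 u))"
  define M where "M = interval_measure G"
  have mG: "G x \<le> G y" if "x \<le> y" for x y
    unfolding G_def by (rule mono_onD[OF mF]) (use that in auto)
  have cG: "continuous_on UNIV G"
    unfolding G_def
    by (rule continuous_on_compose2[OF cF]) (auto intro!: continuous_intros)
  have cGr: "continuous (at_right a) G" for a
  proof -
    have "isCont G a" using cG by (simp add: continuous_on_eq_continuous_at)
    then show ?thesis by (rule continuous_at_imp_continuous_at_within)
  qed
  have meas: "measure M {0<..t} = F t"
    unfolding M_def using measure_interval_measure_Ioc[of 0 t G, OF t mG cGr] F0
    by (simp add: G_def t)
  have fin: "emeasure M {0<..t} < \<infinity>"
    unfolding M_def using emeasure_interval_measure_Ioc[of 0 t G, OF t mG cGr] by simp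
  have pt: "norm (indicator {0<..t} r *\<^sub>R f r) \<le> indicator {0<..t} r" for r
    using fb[of r] by (auto simp: indicator_def)
  have "norm (LS_integral F f t) \<le> (\<integral>r. norm (indicator {0<..t} r *\<^sub>R f r) \<partial>M)"
    unfolding LS_integral_def M_def G_def by (rule integral_norm_bound)
  also have "\<dots> \<le> (\<integral>r. indicator {0<..t} r \<partial>M)"
  proof (cases "integrable M (\<lambda>r. norm (indicator {0<..t} r *\<^sub>R f r))")
    case True
    show ?thesis
      by (rule integral_mono[OF True]) (use fin pt in \<open>auto simp: M_def\<close>)
  next
    case False
    then show ?thesis by (simp add: not_integrable_integral_eq)
  qed
  also have "\<dots> = F t" using meas fin by (simp add: M_def)
  finally show ?thesis .
qed

theorem mainTheorem4:
  fixes D D0 :: "complex set" and B :: "nat \<Rightarrow> complex set" and m :: nat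
    and lp lm :: "nat \<Rightarrow> real"
    and x0 y :: complex and X W :: "real \<Rightarrow> complex"
    and L :: "nat \<Rightarrow> real \<Rightarrow> real" and s :: "nat \<Rightarrow> real \<Rightarrow> real"
    and \<alpha> \<beta> \<gamma> \<delta> :: real and i :: nat
  defines "r \<equiv> r_delta \<delta> D B m lp lm"
  assumes D0: "open D0" "bounded D0" and D_def: "D = closure D0"
    and D_conn: "connected D" and D_sc: "simply_connected D"
    and B0: "B 0 = frontier D"
    and B_smooth: "\<And>j. j \<le> m \<Longrightarrow> smooth_simple_closed_curve (B j)"
    and B_in: "\<And>j. 1 \<le> j \<Longrightarrow> j \<le> m \<Longrightarrow> B j \<subseteq> D0"
    and B_disj: "\<And>j k. j \<le> m \<Longrightarrow> k \<le> m \<Longrightarrow> j \<noteq> k \<Longrightarrow> B j \<inter> B k = {}"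
    and lam_pos: "\<And>j. 1 \<le> j \<Longrightarrow> j \<le> m \<Longrightarrow> lp j > 0 \<and> lm j > 0"
    \<comment> \<open>driving paths: Wiener path and the Markov-chain paths (pathwise properties)\<close>
    and W_cont: "continuous_on {0..} W" and W0: "W 0 = 0"
    and s_vals: "\<And>j t. j \<le> m \<Longrightarrow> t \<ge> 0 \<Longrightarrow> s j t \<in> {-1, 1}"
    and s_cadlag: "\<And>j. j \<le> m \<Longrightarrow> cadlag_on_nonneg (s j)"
    and s0: "\<And>t. s 0 t = 1"
    and s_init: "\<And>j. 1 \<le> j \<Longrightarrow> j \<le> m \<Longrightarrow>
                   s j 0 = (if x0 \<in> pos_side (B j) then 1 else -1)"
    \<comment> \<open>snapping-out Brownian motion started at x0\<close>
    and X_cont: "continuous_on {0..} X" and X_in_D: "\<And>t. t \<ge> 0 \<Longrightarrow> X t \<in> D"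
    and L_cont: "\<And>j. j \<le> m \<Longrightarrow> continuous_on {0..} (L j)"
    and L_mono: "\<And>j. j \<le> m \<Longrightarrow> mono_on {0..} (L j)"
    and L0: "\<And>j. j \<le> m \<Longrightarrow> L j 0 = 0"
    and L_nonneg: "\<And>j t. j \<le> m \<Longrightarrow> t \<ge> 0 \<Longrightarrow> L j t \<ge> 0"
    and SDE: "\<And>t. t \<ge> 0 \<Longrightarrow> X t = x0 + W t +
                 (\<Sum>j\<le>m. LS_integral (L j)
                    (\<lambda>u. (of_real (s j (L j u) * indicator (B j) (X u)) :: complex)
                          * inward_normal (B j) (X u)) t)"
    and L_supp: "\<And>j t. j \<le> m \<Longrightarrow> t \<ge> 0 \<Longrightarrow>
                   L j t = LS_integral (L j) (\<lambda>u. indicator (B j) (X u) :: real) t"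
    and sides: "\<And>j t. j \<le> m \<Longrightarrow> t \<ge> 0 \<Longrightarrow>
                   (s j (L j t) = 1 \<longrightarrow> X t \<in> pos_side (B j)) \<and>
                   (s j (L j t) = -1 \<longrightarrow> X t \<in> neg_side (B j))"
    \<comment> \<open>hypotheses of the theorem\<close>
    and abg: "\<alpha> > 0" "\<beta> > 0" "\<gamma> > 0" "\<gamma> < 1/5"
    and del: "0 < \<delta>" "\<delta> < 1/2"
    and i: "1 \<le> i" "i \<le> m"
    and x0_in: "x0 \<in> calD \<delta> D B m lp lm" and y_in: "y \<in> calD \<delta> D B m lp lm"
    and close: "norm (x0 - y) \<le> 4/5 * r"
    and diff_sides: "(x0 \<in> pos_side (B i) \<and> y \<in> neg_side (B i)) \<or>
                     (x0 \<in> neg_side (B i) \<and> y \<in> pos_side (B i))"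
    \<comment> \<open>the event A\<close>
    and A1: "E1 (s i) < ereal (\<alpha> * r)"
    and A2: "E2 (s i) > ereal (\<beta> * r)"
    and A3: "\<And>t. 0 \<le> t \<Longrightarrow> t \<le> r\<^sup>2 \<Longrightarrow>
               norm (W t - of_real (t / r\<^sup>2) * (y - x0)) \<le> \<gamma> * r"
  shows "\<forall>t. 0 \<le> t \<and> t \<le> r\<^sup>2 \<and> L i t < (1/5 - \<gamma>) * r \<longrightarrow> X t \<in> ball x0 r"


proof (intro allI impI)
  fix t1 assume t1: "0 \<le> t1 \<and> t1 \<le> r\<^sup>2 \<and> L i t1 < (1/5 - \<gamma>) * r"
  define U where "U = (\<Union>j\<le>m. B j)"
  have param: "\<exists>g. param_of g (B j)" if "j \<le> m" for j
    using B_smooth[OF that] unfolding smooth_simple_closed_curve_def .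
  have closedB: "closed (B j)" if "j \<le> m" for j
    using param[OF that] param_compact compact_imp_closed by blast
  have E1ge: "E1 (s i) \<ge> 0" unfolding E1_def by (auto intro!: Inf_greatest)
  have rpos: "r > 0"
  proof -
    have "ereal 0 < ereal (\<alpha> * r)" using E1ge A1 by (metis zero_ereal_def order.strict_trans1)
    then have "\<alpha> * r > 0" by simp
    then show ?thesis using abg(1) by (simp add: zero_less_mult_iff)
  qed
  have rrho: "r \<le> \<delta> * rho D B m"
    unfolding r_def r_delta_def using del(1) by (intro mult_left_mono) auto
  have rlt: "r < rho D B m"
  proof -
    have "rho D B m > 0"
    proof (rule ccontr)
      assume "\<not> rho D B m > 0"
      then have "\<delta> * rho D B m \<le> 0" using del(1) by (simp add: mult_nonneg_nonpos)
      then show False using rrho rpos by linarith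
    qed
    then have "\<delta> * rho D B m < 1 * rho D B m" using del by (intro mult_strict_right_mono) auto
    then show ?thesis using rrho by linarith
  qed
  define S where "S = {r. r \<ge> 0 \<and> (\<forall>r'\<le>r. \<forall>x\<in>D. connected (ball x r' \<inter> (\<Union>j\<le>m. B j)))}"
  have "\<exists>R\<in>S. r < R"
  proof (cases "bdd_above S")
    case True
    have "0 \<in> S" unfolding S_def by (auto simp: ball_empty)
    then have "S \<noteq> {}" by auto
    then show ?thesis using rlt True less_cSup_iff[of S r] unfolding rho_def S_def[symmetric] by auto
  next
    case False
    then show ?thesis unfolding bdd_above_def by (meson not_le)
  qed
  then obtain R where R: "r < R" "\<And>x. x \<in> D \<Longrightarrow> connected (ball x R \<inter> U)"
    unfolding S_def U_def by auto
  have x0D: "x0 \<in> D" using x0_in unfolding calD_def by auto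
  have x0nB: "x0 \<notin> B i" using x0_in rpos i unfolding calD_def r_def[symmetric]
    by (force dest: bspec[of _ _ x0])
  have ynB: "y \<notin> B i" using y_in rpos i unfolding calD_def r_def[symmetric]
    by (force dest: bspec[of _ _ y])
  obtain z where z: "z \<in> B i" "dist x0 z < r"
  proof -
    have cBi: "closed (B i)" using closedB i by auto
    have "closed_segment x0 y \<inter> frontier (inside (B i)) \<noteq> {}"
    proof (rule disjE[OF diff_sides])
      assume a: "x0 \<in> pos_side (B i) \<and> y \<in> neg_side (B i)"
      have "x0 \<in> inside (B i)"
        using a x0nB frontier_inside_subset[OF cBi] closure_Un_frontier[of "inside (B i)"]
        unfolding pos_side_def by auto
      moreover have "y \<notin> inside (B i)"
        using a closure_outside_subset[OF cBi] inside_Int_outside[of "B i"] inside_no_overlap[of "B i"]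
        unfolding neg_side_def by blast
      ultimately show ?thesis
        by (intro connected_Int_frontier) auto
    next
      assume a: "x0 \<in> neg_side (B i) \<and> y \<in> pos_side (B i)"
      have "y \<in> inside (B i)"
        using a ynB frontier_inside_subset[OF cBi] closure_Un_frontier[of "inside (B i)"]
        unfolding pos_side_def by auto
      moreover have "x0 \<notin> inside (B i)"
        using a closure_outside_subset[OF cBi] inside_Int_outside[of "B i"] inside_no_overlap[of "B i"]
        unfolding neg_side_def by blast
      ultimately show ?thesis
        by (intro connected_Int_frontier) auto
    qed
    then obtain z where "z \<in> closed_segment x0 y" "z \<in> B i"
      using frontier_inside_subset[OF cBi] by auto
    moreover then have "dist x0 z < r"
      using dist_in_closed_segment[of z x0 y] close rpos by (auto simp: dist_norm dist_commute norm_minus_commute[of x0 z])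
    ultimately show ?thesis using that by auto
  qed
  have away: "B j \<inter> ball x0 R = {}" if j: "j \<le> m" "j \<noteq> i" for j
  proof (rule ccontr)
    assume "B j \<inter> ball x0 R \<noteq> {}"
    then obtain p where p: "p \<in> B j" "p \<in> ball x0 R" by auto
    let ?C = "\<Union>k\<in>{k. k \<le> m \<and> k \<noteq> j}. B k"
    have "closed ?C" using closedB by (intro closed_UN) auto
    moreover have "ball x0 R \<inter> U \<subseteq> B j \<union> ?C" unfolding U_def by auto
    moreover have "B j \<inter> ?C \<inter> (ball x0 R \<inter> U) = {}" using B_disj j by auto
    moreover have "B j \<inter> (ball x0 R \<inter> U) \<noteq> {}" using p j unfolding U_def by auto
    moreover have "?C \<inter> (ball x0 R \<inter> U) \<noteq> {}"
      using z j i R(1) unfolding U_def by (auto simp: dist_commute intro!: exI[of _ z])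
    ultimately show False using R(2)[OF x0D] closedB[OF j(1)] unfolding connected_closed by blast
  qed
  show "X t1 \<in> ball x0 r"
  proof (rule ccontr)
    assume out: "X t1 \<notin> ball x0 r"
    define T where "T = {0..t1} \<inter> X -` (- ball x0 r)"
    have cX: "continuous_on {0..t1} X" using X_cont by (rule continuous_on_subset) auto
    have "closed T" unfolding T_def by (rule continuous_closed_preimage[OF cX]) auto
    moreover have "T \<noteq> {}" using out t1 unfolding T_def by auto
    moreover have "bdd_below T" unfolding T_def by auto
    ultimately have tauT: "Inf T \<in> T" by (rule closed_contains_Inf[rotated 2])
    define \<tau> where "\<tau> = Inf T"
    have tau: "0 \<le> \<tau>" "\<tau> \<le> t1" "X \<tau> \<notin> ball x0 r" using tauT unfolding \<tau>_def T_def by auto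
    have before: "X u \<in> ball x0 r" if "0 \<le> u" "u < \<tau>" for u
    proof (rule ccontr)
      assume "X u \<notin> ball x0 r"
      then have "u \<in> T" using that tau unfolding T_def by auto
      then have "\<tau> \<le> u" unfolding \<tau>_def by (rule cInf_lower) (auto simp: T_def)
      then show False using that by auto
    qed
    have LS0: "LS_integral F f 0 = 0" for F and f :: "real \<Rightarrow> complex"
      unfolding LS_integral_def by simp
    have X0: "X 0 = x0" using SDE[of 0] W0 by (simp add: LS0)
    have taupos: "\<tau> > 0" using tau X0 rpos by (cases "\<tau> = 0") auto
    have cball: "X u \<in> cball x0 r" if "0 \<le> u" "u \<le> \<tau>" for u
    proof -
      have cXt: "continuous_on {0..\<tau>} X" using X_cont by (rule continuous_on_subset) auto
      have "X ` closure {0..<\<tau>} \<subseteq> cball x0 r"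
      proof (rule image_closure_subset)
        show "X ` {0..<\<tau>} \<subseteq> cball x0 r"
        proof
          fix p assume "p \<in> X ` {0..<\<tau>}"
          then obtain u where u: "0 \<le> u" "u < \<tau>" "p = X u" by auto
          show "p \<in> cball x0 r" using before[OF u(1,2)] u(3) by simp
        qed
      qed (use cXt taupos in auto)
      then show ?thesis using that taupos by (auto simp: image_subset_iff)
    qed
    define f where "f j u = (of_real (s j (L j u) * indicator (B j) (X u)) :: complex)
                          * inward_normal (B j) (X u)" for j u
    have zero: "LS_integral (L j) (f j) \<tau> = 0" if j: "j \<le> m" "j \<noteq> i" for j
    proof -
      have "indicator {0<..\<tau>} u *\<^sub>R f j u = 0" for u
      proof (cases "u \<in> {0<..\<tau>}")
        case True
        then have "X u \<in> ball x0 R" using cball[of u] R(1) by auto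
        then have "X u \<notin> B j" using away[OF j] by auto
        then show ?thesis by (simp add: f_def)
      qed simp
      then have "(\<lambda>u. indicator {0<..\<tau>} u *\<^sub>R f j u) = (\<lambda>u. 0)" by (rule ext)
      then show ?thesis unfolding LS_integral_def by simp
    qed
    have sumeq: "(\<Sum>j\<le>m. LS_integral (L j) (f j) \<tau>) = LS_integral (L i) (f i) \<tau>"
      using zero i by (subst sum.remove[of _ i]) auto
    have Xtau: "X \<tau> = x0 + W \<tau> + LS_integral (L i) (f i) \<tau>"
      using SDE[OF tau(1)] sumeq unfolding f_def by simp
    have Ib: "norm (LS_integral (L i) (f i) \<tau>) \<le> L i \<tau>"
    proof (rule LS_bound[OF L_cont L_mono L0 tau(1)])
      fix u assume u: "0 < u" "u \<le> \<tau>"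
      have sv: "s i (L i u) \<in> {-1, 1}" using s_vals L_nonneg i u by auto
      show "norm (f i u) \<le> 1"
      proof (cases "X u \<in> B i")
        case True
        obtain g where "param_of g (B i)" using param i by auto
        then have "norm (inward_normal (B i) (X u)) = 1" using normal_norm True by blast
        then show ?thesis using sv True by (auto simp: f_def norm_mult)
      qed (simp add: f_def)
    qed (use i in auto)
    have Lle: "L i \<tau> \<le> L i t1"
      using mono_onD[OF L_mono[of i]] i tau by auto
    have Wb: "norm (W \<tau>) \<le> \<gamma> * r + 4/5 * r"
    proof -
      have tr: "\<tau> / r\<^sup>2 \<le> 1" "\<tau> / r\<^sup>2 \<ge> 0" using tau t1 rpos by auto
      have "norm (W \<tau>) \<le> norm (W \<tau> - of_real (\<tau> / r\<^sup>2) * (y - x0)) + norm (of_real (\<tau> / r\<^sup>2) * (y - x0))"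
        using norm_triangle_sub[of "W \<tau>" "of_real (\<tau> / r\<^sup>2) * (y - x0)"] by linarith
      also have "\<dots> \<le> \<gamma> * r + 1 * (4/5 * r)"
      proof (rule add_mono)
        show "norm (W \<tau> - of_real (\<tau> / r\<^sup>2) * (y - x0)) \<le> \<gamma> * r" using A3 tau t1 by auto
        have "norm (y - x0) \<le> 4/5 * r" using close by (simp add: norm_minus_commute)
        then show "norm (of_real (\<tau> / r\<^sup>2) * (y - x0)) \<le> 1 * (4/5 * r)"
        proof -
          have "norm (of_real (\<tau> / r\<^sup>2) :: complex) \<le> 1"
            unfolding norm_of_real using tr by linarith
          then show ?thesis unfolding norm_mult using \<open>norm (y - x0) \<le> 4/5 * r\<close>
            by (intro mult_mono) auto
        qed
      qed
      finally show ?thesis by simp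
    qed
    have "norm (X \<tau> - x0) < r"
    proof -
      have "norm (X \<tau> - x0) \<le> norm (W \<tau>) + norm (LS_integral (L i) (f i) \<tau>)"
        unfolding Xtau by (simp add: norm_triangle_ineq)
      moreover have "(1/5 - \<gamma>) * r = r/5 - \<gamma> * r" by (simp add: algebra_simps)
      ultimately show ?thesis using Wb Ib Lle t1 by linarith
    qed
    then show False using tau(3) by (auto simp: dist_norm norm_minus_commute)
  qed
qed


end
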